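(* Let $G$ be a connected graph with $n\ge 2$ vertices and let $x$ be an $l_\infty$-Fiedler vector of $G$. Then $\|x\|_2^2\ge \dfrac{n}{n-1}$. Moreover, equality holds if and only if $G$ is isomorphic to the complete graph $K_n$.
   Context: For a finite simple undirected graph $G$ with $n$ vertices, let $\mathcal{F}=\{x\in\mathbb{R}^{V(G)} : \sum_{v} x_v = 0,\ \|x\|_\infty = 1\}$, for $x\in\mathcal{F}$ let $\gamma_x(G)=\max_{uv\in E(G)}|x_u-x_v|$, and $\gamma(G)=\min_{x\in\mathcal{F}}\gamma_x(G)$. A vector $x\in\mathcal{F}$ with $\gamma_x(G)=\gamma(G)$ is called an $l_\infty$-Fiedler vector of $G$. $\|x\|_2$ is the Euclidean norm. *)

theory Defs
  imports Complex_Main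
begin

definition simple_graph :: "'a set \<Rightarrow> ('a \<Rightarrow> 'a \<Rightarrow> bool) \<Rightarrow> bool" where
  "simple_graph V E \<longleftrightarrow> finite V \<and> (\<forall>u v. E u v \<longrightarrow> u \<in> V \<and> v \<in> V)
     \<and> (\<forall>u v. E u v \<longrightarrow> E v u) \<and> (\<forall>u. \<not> E u u)"

definition connected_graph :: "'a set \<Rightarrow> ('a \<Rightarrow> 'a \<Rightarrow> bool) \<Rightarrow> bool" where
  "connected_graph V E \<longleftrightarrow> (\<forall>u\<in>V. \<forall>v\<in>V. E\<^sup>*\<^sup>* u v)"

definition iso_complete :: "'a set \<Rightarrow> ('a \<Rightarrow> 'a \<Rightarrow> bool) \<Rightarrow> nat \<Rightarrow> bool" where
  "iso_complete V E n \<longleftrightarrow> (\<exists>f. bij_betw f V {0..<n} \<and>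
      (\<forall>u\<in>V. \<forall>v\<in>V. E u v \<longleftrightarrow> f u \<noteq> f v))"

text \<open>The set F of vectors in R^V (only the values on V matter).\<close>
definition Fset :: "'a set \<Rightarrow> ('a \<Rightarrow> real) set" where
  "Fset V = {x. (\<Sum>v\<in>V. x v) = 0 \<and> Max ((\<lambda>v. \<bar>x v\<bar>) ` V) = 1}"

definition gamma_x :: "'a set \<Rightarrow> ('a \<Rightarrow> 'a \<Rightarrow> bool) \<Rightarrow> ('a \<Rightarrow> real) \<Rightarrow> real" where
  "gamma_x V E x = Max {\<bar>x u - x v\<bar> | u v. u \<in> V \<and> v \<in> V \<and> E u v}"

definition gamma :: "'a set \<Rightarrow> ('a \<Rightarrow> 'a \<Rightarrow> bool) \<Rightarrow> real" where
  "gamma V E = Inf (gamma_x V E ` Fset V)"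

definition linf_fiedler :: "'a set \<Rightarrow> ('a \<Rightarrow> 'a \<Rightarrow> bool) \<Rightarrow> ('a \<Rightarrow> real) \<Rightarrow> bool" where
  "linf_fiedler V E x \<longleftrightarrow> x \<in> Fset V \<and> gamma_x V E x = gamma V E"

end

theory Submission
  imports Defs
begin

lemma sq_id:
  fixes x :: "'a \<Rightarrow> real"
  assumes fin: "finite V" and u: "u \<in> V" and s: "(\<Sum>v\<in>V. x v) = 0"
    and xu: "(x u)^2 = 1" and c: "card V \<ge> 2"
  shows "(\<Sum>v\<in>V. (x v)^2) = real (card V)/(real (card V) - 1)
     + (\<Sum>v\<in>V-{u}. (x v + x u/(real (card V) - 1))^2)"
proof -
  define m where "m = real (card V) - 1"
  have m0: "m > 0" using c by (simp add: m_def)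
  have cm: "real (card (V-{u})) = m" using c u fin by (simp add: m_def card_Diff_singleton of_nat_diff)
  have s1: "(\<Sum>v\<in>V-{u}. x v) = - x u" using s sum.remove[OF fin u, of x] by simp
  have q1: "(\<Sum>v\<in>V. (x v)^2) = (x u)^2 + (\<Sum>v\<in>V-{u}. (x v)^2)"
    using sum.remove[OF fin u] .
  have "(\<Sum>v\<in>V-{u}. (x v + x u/m)^2) = (\<Sum>v\<in>V-{u}. (x v)^2 + 2*(x u/m)* x v + (x u/m)^2)"
    by (rule sum.cong) (auto simp: power2_sum)
  also have "\<dots> = (\<Sum>v\<in>V-{u}. (x v)^2) + 2*(x u/m)*(\<Sum>v\<in>V-{u}. x v) + m*(x u/m)^2"
    by (simp add: sum.distrib sum_distrib_left cm)
  also have "\<dots> = (\<Sum>v\<in>V-{u}. (x v)^2) - 2/m + 1/m"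
    using s1 xu m0 by (simp add: power2_eq_square field_simps)
  finally have "(\<Sum>v\<in>V-{u}. (x v + x u/m)^2) = (\<Sum>v\<in>V. (x v)^2) - 1 - 1/m"
    using q1 xu by simp
  moreover have "real (card V)/m = 1 + 1/m" using m0 by (simp add: m_def field_simps)
  ultimately show ?thesis unfolding m_def[symmetric] by simp
qed

theorem lemma4p4:
  fixes V :: "'a set" and E :: "'a \<Rightarrow> 'a \<Rightarrow> bool" and x :: "'a \<Rightarrow> real"
  assumes "simple_graph V E" and "connected_graph V E" and "card V \<ge> 2"
    and "linf_fiedler V E x"
  shows "(\<Sum>v\<in>V. (x v)\<^sup>2) \<ge> real (card V) / (real (card V) - 1)
    \<and> ((\<Sum>v\<in>V. (x v)\<^sup>2) = real (card V) / (real (card V) - 1) \<longleftrightarrow> iso_complete V E (card V))"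
proof -
  have fin: "finite V" and inV: "\<And>a b. E a b \<Longrightarrow> a \<in> V \<and> b \<in> V"
    and sym: "\<And>a b. E a b \<Longrightarrow> E b a" and irr: "\<And>a. \<not> E a a"
    using assms(1) unfolding simple_graph_def by auto
  have con: "\<And>a b. a \<in> V \<Longrightarrow> b \<in> V \<Longrightarrow> E\<^sup>*\<^sup>* a b" using assms(2) unfolding connected_graph_def by auto
  have c: "card V \<ge> 2" by fact
  have Vne: "V \<noteq> {}" using c by auto
  have xF: "x \<in> Fset V" and gx: "gamma_x V E x = gamma V E" using assms(4) unfolding linf_fiedler_def by auto
  have s: "(\<Sum>v\<in>V. x v) = 0" and mx: "Max ((\<lambda>v. \<bar>x v\<bar>) ` V) = 1" using xF unfolding Fset_def by auto
  have "Max ((\<lambda>v. \<bar>x v\<bar>) ` V) \<in> (\<lambda>v. \<bar>x v\<bar>) ` V" using fin Vne by (intro Max_in) auto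
  then obtain u where u: "u \<in> V" and xu1: "\<bar>x u\<bar> = 1" using mx by auto
  have xu: "(x u)^2 = 1" using xu1 by (metis power2_abs one_power2)
  have xupm: "x u = 1 \<or> x u = -1" using xu1 by auto
  define m where "m = real (card V) - 1"
  have m0: "m \<ge> 1" using c by (simp add: m_def)
  have cm: "real (card (V-{u})) = m" using c u fin by (simp add: m_def card_Diff_singleton of_nat_diff)
  have ID: "(\<Sum>v\<in>V. (x v)^2) = real (card V)/m + (\<Sum>v\<in>V-{u}. (x v + x u/m)^2)"
    using sq_id[OF fin u s xu c] unfolding m_def .
  have nn: "(\<Sum>v\<in>V-{u}. (x v + x u/m)^2) \<ge> 0" by (rule sum_nonneg) auto
  have nm: "real (card V)/m = 1 + 1/m" using m0 by (simp add: m_def field_simps)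
  have "\<not> V \<subseteq> {u}"
  proof
    assume "V \<subseteq> {u}" then have "card V \<le> card {u}" by (intro card_mono) auto
    then show False using c by simp
  qed
  then obtain q where q: "q \<in> V" "q \<noteq> u" by auto
  have "E\<^sup>*\<^sup>* u q" using con u q by auto
  then obtain w where uw: "E u w"
    by (rule converse_rtranclpE) (use q in auto)
  have wV: "w \<in> V" and wu: "w \<noteq> u" using inV[OF uw] irr uw by auto
  have finGX: "\<And>y::'a \<Rightarrow> real. finite {\<bar>y a - y b\<bar> | a b. a \<in> V \<and> b \<in> V \<and> E a b}"
  proof -
    fix y :: "'a \<Rightarrow> real"
    show "finite {\<bar>y a - y b\<bar> | a b. a \<in> V \<and> b \<in> V \<and> E a b}"
    proof (rule finite_subset[of _ "(\<lambda>p. \<bar>y (fst p) - y (snd p)\<bar>) ` (V \<times> V)"])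
      show "{\<bar>y a - y b\<bar> | a b. a \<in> V \<and> b \<in> V \<and> E a b} \<subseteq> (\<lambda>p. \<bar>y (fst p) - y (snd p)\<bar>) ` (V \<times> V)"
      proof
        fix t assume "t \<in> {\<bar>y a - y b\<bar> | a b. a \<in> V \<and> b \<in> V \<and> E a b}"
        then obtain a b where "t = \<bar>y a - y b\<bar>" "a \<in> V" "b \<in> V" by blast
        then show "t \<in> (\<lambda>p. \<bar>y (fst p) - y (snd p)\<bar>) ` (V \<times> V)"
          by (intro image_eqI[of _ _ "(a,b)"]) auto
      qed
    next
      show "finite ((\<lambda>p. \<bar>y (fst p) - y (snd p)\<bar>) ` (V \<times> V))" using fin by simp
    qed
  qed
  have ge: "\<And>(y::'a \<Rightarrow> real) a b. E a b \<Longrightarrow> \<bar>y a - y b\<bar> \<le> gamma_x V E y"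
    unfolding gamma_x_def by (rule Max_ge[OF finGX]) (use inV in blast)
  have le: "\<And>(y::'a \<Rightarrow> real) B. (\<And>a b. a \<in> V \<Longrightarrow> b \<in> V \<Longrightarrow> E a b \<Longrightarrow> \<bar>y a - y b\<bar> \<le> B) \<Longrightarrow> gamma_x V E y \<le> B"
  proof -
    fix y :: "'a \<Rightarrow> real" and B
    assume h: "\<And>a b. a \<in> V \<Longrightarrow> b \<in> V \<Longrightarrow> E a b \<Longrightarrow> \<bar>y a - y b\<bar> \<le> B"
    show "gamma_x V E y \<le> B" unfolding gamma_x_def
      by (rule Max.boundedI[OF finGX]) (use h uw u wV in auto)
  qed
  have bdd: "bdd_below (gamma_x V E ` Fset V)"
  proof (rule bdd_belowI[of _ 0])
    fix t assume "t \<in> gamma_x V E ` Fset V"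
    then obtain y where "t = gamma_x V E y" by auto
    then show "0 \<le> t" using ge[OF uw, of y] by linarith
  qed
  have gle: "\<And>y. y \<in> Fset V \<Longrightarrow> gamma V E \<le> gamma_x V E y"
    unfolding gamma_def by (rule cInf_lower[OF _ bdd]) auto
  have part1: "(\<Sum>v\<in>V. (x v)\<^sup>2) \<ge> real (card V) / (real (card V) - 1)"
    using ID nn unfolding m_def by simp
  have eqiff: "(\<Sum>v\<in>V. (x v)\<^sup>2) = real (card V) / m \<longleftrightarrow> (\<forall>v\<in>V-{u}. x v + x u/m = 0)"
  proof -
    have "(\<Sum>v\<in>V. (x v)\<^sup>2) = real (card V) / m \<longleftrightarrow> (\<Sum>v\<in>V-{u}. (x v + x u/m)^2) = 0"
      using ID by simp
    also have "\<dots> \<longleftrightarrow> (\<forall>v\<in>V-{u}. (x v + x u/m)^2 = 0)"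
      by (rule sum_nonneg_eq_0_iff) (use fin in auto)
    finally show ?thesis by simp
  qed
  have part2: "(\<Sum>v\<in>V. (x v)\<^sup>2) = real (card V) / m \<longleftrightarrow> iso_complete V E (card V)"
  proof
    assume eq: "(\<Sum>v\<in>V. (x v)\<^sup>2) = real (card V) / m"
    show "iso_complete V E (card V)"
    proof (rule ccontr)
      assume niso: "\<not> iso_complete V E (card V)"
      have "\<exists>a\<in>V. \<exists>b\<in>V. a \<noteq> b \<and> \<not> E a b"
      proof (rule ccontr)
        assume "\<not> ?thesis"
        then have EE: "\<forall>a\<in>V. \<forall>b\<in>V. E a b \<longleftrightarrow> a \<noteq> b" using irr by blast
        obtain f where f: "bij_betw f V {0..<card V}" using ex_bij_betw_finite_nat[OF fin] by auto
        then have "inj_on f V" by (rule bij_betw_imp_inj_on)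
        then have "\<forall>a\<in>V. \<forall>b\<in>V. E a b \<longleftrightarrow> f a \<noteq> f b" using EE by (metis inj_on_contraD)
        then show False using niso f unfolding iso_complete_def by blast
      qed
      then obtain a b where ab: "a \<in> V" "b \<in> V" "a \<noteq> b" "\<not> E a b" by blast
      define y where "y = (\<lambda>v. (if v = a then 1 else 0) - (if v = b then 1 else (0::real)))"
      have ys: "(\<Sum>v\<in>V. y v) = 0" unfolding y_def using ab fin by (simp add: sum_subtractf)
      have ym: "Max ((\<lambda>v. \<bar>y v\<bar>) ` V) = 1"
        by (rule Max_eqI) (use fin ab in \<open>auto simp: y_def\<close>)
      have yF: "y \<in> Fset V" using ys ym unfolding Fset_def by auto
      have "gamma_x V E y \<le> 1"
      proof (rule le)
        fix c d assume "c \<in> V" "d \<in> V" "E c d"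
        then show "\<bar>y c - y d\<bar> \<le> 1" using ab sym irr unfolding y_def by auto
      qed
      then have g1: "gamma_x V E x \<le> 1" using gx gle[OF yF] by simp
      have "x w + x u/m = 0" using eq eqiff wV wu by auto
      then have "x w = - x u/m" by simp
      moreover have mp: "1/m > 0" using m0 by simp
      then have "\<bar>x u - x w\<bar> = 1 + 1/m"
      proof (cases "x u = 1")
        case True
        then have "x u - x w = 1 + 1/m" using \<open>x w = - x u/m\<close> by simp
        then show ?thesis using mp by arith
      next
        case False then have "x u = -1" using xupm by simp
        then have "x u - x w = -(1 + 1/m)" using \<open>x w = - x u/m\<close> by simp
        then show ?thesis using mp by arith
      qed
      then show False using mp using ge[OF uw, of x] g1 by linarith
    qed
  next
    assume "iso_complete V E (card V)"
    then obtain f where f: "bij_betw f V {0..<card V}" and fE: "\<forall>a\<in>V. \<forall>b\<in>V. E a b \<longleftrightarrow> f a \<noteq> f b"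
      unfolding iso_complete_def by blast
    have EE: "\<And>a b. a \<in> V \<Longrightarrow> b \<in> V \<Longrightarrow> E a b \<longleftrightarrow> a \<noteq> b"
      using fE bij_betw_imp_inj_on[OF f] by (metis inj_on_contraD)
    define z where "z = (\<lambda>v. if v = u then 1 else - 1/m)"
    have "(\<Sum>v\<in>V. z v) = z u + (\<Sum>v\<in>V-{u}. z v)" using sum.remove[OF fin u] .
    also have "(\<Sum>v\<in>V-{u}. z v) = (\<Sum>v\<in>V-{u}. - 1/m)" by (rule sum.cong) (auto simp: z_def)
    also have "\<dots> = -1" using cm m0 by simp
    finally have zs: "(\<Sum>v\<in>V. z v) = 0" by (simp add: z_def)
    have zm: "Max ((\<lambda>v. \<bar>z v\<bar>) ` V) = 1"
      by (rule Max_eqI) (use fin u m0 in \<open>auto simp: z_def\<close>)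
    have zF: "z \<in> Fset V" using zs zm unfolding Fset_def by auto
    have "gamma_x V E z \<le> 1 + 1/m"
    proof (rule le)
      fix c d assume "c \<in> V" "d \<in> V" "E c d"
      have mp: "1/m > 0" using m0 by simp
      show "\<bar>z c - z d\<bar> \<le> 1 + 1/m"
      proof (cases "c = u"; cases "d = u")
      qed (use mp in \<open>simp_all add: z_def\<close>, (linarith | simp add: abs_if)+)
    qed
    then have g1: "gamma_x V E x \<le> 1 + 1/m" using gx gle[OF zF] by simp
    have nnv: "\<forall>v\<in>V-{u}. x u * (x v + x u/m) \<ge> 0"
    proof
      fix v assume v: "v \<in> V-{u}"
      then have "E u v" using EE u by auto
      then have h: "\<bar>x u - x v\<bar> \<le> 1 + 1/m" using ge[of u v x] g1 by linarith
      show "x u * (x v + x u/m) \<ge> 0"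
        using xupm
      proof
        assume "x u = 1" then show ?thesis using h by (auto simp: abs_le_iff)
      next
        assume "x u = -1" then show ?thesis using h by (auto simp: abs_le_iff)
      qed
    qed
    have "(\<Sum>v\<in>V-{u}. x u * (x v + x u/m)) = x u * (\<Sum>v\<in>V-{u}. x v) + m * ((x u)^2/m)"
      by (simp add: distrib_left sum.distrib sum_distrib_left[symmetric] cm power2_eq_square)
    also have "(\<Sum>v\<in>V-{u}. x v) = - x u" using s sum.remove[OF fin u, of x] by simp
    finally have "(\<Sum>v\<in>V-{u}. x u * (x v + x u/m)) = 0" using xu m0 by (simp add: power2_eq_square)
    then have "\<forall>v\<in>V-{u}. x u * (x v + x u/m) = 0"
      using sum_nonneg_eq_0_iff[of "V-{u}" "\<lambda>v. x u * (x v + x u/m)"] fin nnv by auto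
    then have "\<forall>v\<in>V-{u}. x v + x u/m = 0" using xu1 by auto
    then show "(\<Sum>v\<in>V. (x v)\<^sup>2) = real (card V) / m" using eqiff by simp
  qed
  show ?thesis using part1 part2 unfolding m_def by simp
qed

end
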